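(* Let $A\in\mathbb{R}^{n\times n}$ with $K_A=\mathbb{R}^n_+\cap R(A)\ne\{0\}$. If $A$ is strictly copositive on $K_A$, i.e. $x^TAx>0$ for every nonzero $x\in K_A$, then $A$ is a Karamardian matrix.
   Context: For $M\in\mathbb{R}^{n\times n}$ let $K_M=\mathbb{R}^n_+\cap R(M)$ and $K_M^*=\{y: x^Ty\ge 0\ \forall x\in K_M\}$ (one has $K_M^*=\mathbb{R}^n_++N(M^T)$, with interior $\{a+b: a>0,\ b\in N(M^T)\}$). For $q$, LCP$(M,K_M,q)$ is to find $x\in K_M$ with $Mx+q\in K_M^*$ and $x^T(Mx+q)=0$. $M$ is a Karamardian matrix if $K_M\ne\{0\}$ and there exists $d$ in the interior of $K_M^*$ such that both LCP$(M,K_M,0)$ and LCP$(M,K_M,d)$ have $x=0$ as their only solution. *)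

theory Defs
  imports "HOL-Analysis.Analysis"
begin

definition nonneg_orthant :: "(real ^ 'n) set" where
  "nonneg_orthant = {x. \<forall>i. 0 \<le> x $ i}"

definition range_mat :: "real ^ 'n ^ 'n \<Rightarrow> (real ^ 'n) set" where
  "range_mat M = {M *v x | x. True}"

definition K_cone :: "real ^ 'n ^ 'n \<Rightarrow> (real ^ 'n) set" where
  "K_cone M = nonneg_orthant \<inter> range_mat M"

definition dual_cone :: "(real ^ 'n) set \<Rightarrow> (real ^ 'n) set" where
  "dual_cone K = {y. \<forall>x\<in>K. 0 \<le> x \<bullet> y}"

definition LCP_sol :: "real ^ 'n ^ 'n \<Rightarrow> (real ^ 'n) set \<Rightarrow> real ^ 'n \<Rightarrow> real ^ 'n \<Rightarrow> bool" where
  "LCP_sol M K q x \<longleftrightarrow> x \<in> K \<and> M *v x + q \<in> dual_cone K \<and> x \<bullet> (M *v x + q) = 0"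

definition karamardian :: "real ^ 'n ^ 'n \<Rightarrow> bool" where
  "karamardian M \<longleftrightarrow> K_cone M \<noteq> {0} \<and>
     (\<exists>d \<in> interior (dual_cone (K_cone M)).
        (\<forall>x. LCP_sol M (K_cone M) 0 x \<longleftrightarrow> x = 0) \<and>
        (\<forall>x. LCP_sol M (K_cone M) d x \<longleftrightarrow> x = 0))"

end

theory Submission
  imports Defs
begin

lemma pos_open: "open {y::real^'n::finite. \<forall>i. 0 < y $ i}"
proof -
  have "{y::real^'n. \<forall>i. 0 < y $ i} = (\<Inter>i\<in>UNIV. {y. y $ i > 0})" by auto
  moreover have "open (\<Inter>i\<in>(UNIV::'n set). {y::real^'n. y $ i > 0})"
    by (rule open_INT) (auto intro: open_halfspace_component_gt_cart)
  ultimately show ?thesis by simp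
qed

lemma pos_dual: "{y::real^'n. \<forall>i. 0 < y $ i} \<subseteq> dual_cone (K_cone M)"
proof
  fix y :: "real^'n" assume y: "y \<in> {y. \<forall>i. 0 < y $ i}"
  show "y \<in> dual_cone (K_cone M)"
    unfolding dual_cone_def
  proof (intro CollectI ballI)
    fix x assume "x \<in> K_cone M"
    hence "\<forall>i. 0 \<le> x $ i" by (simp add: K_cone_def nonneg_orthant_def)
    thus "0 \<le> x \<bullet> y" using y unfolding inner_vec_def
      by (auto intro!: sum_nonneg simp: less_imp_le)
  qed
qed

theorem mainTheorem18:
  fixes A :: "real ^ 'n ^ 'n"
  assumes "K_cone A \<noteq> {0}"
    and "\<forall>x \<in> K_cone A. x \<noteq> 0 \<longrightarrow> x \<bullet> (A *v x) > 0"
  shows "karamardian A"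
proof -
  define d :: "real^'n" where "d = (\<chi> i. 1)"
  have dpos: "d \<in> {y. \<forall>i. 0 < y $ i}" by (simp add: d_def)
  have dint: "d \<in> interior (dual_cone (K_cone A))"
    using interior_maximal[OF pos_dual pos_open] dpos by blast
  have ddual: "d \<in> dual_cone (K_cone A)" using pos_dual dpos by blast
  have zK: "0 \<in> K_cone A"
    unfolding K_cone_def nonneg_orthant_def range_mat_def
    by (auto intro!: exI[of _ 0])
  have zdual: "0 \<in> dual_cone (K_cone A)" by (simp add: dual_cone_def)
  have q0: "LCP_sol A (K_cone A) 0 x \<longleftrightarrow> x = 0" for x
  proof
    assume "LCP_sol A (K_cone A) 0 x"
    thus "x = 0" using assms(2) unfolding LCP_sol_def by force
  next
    assume "x = 0" thus "LCP_sol A (K_cone A) 0 x" using zK zdual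
      by (simp add: LCP_sol_def)
  qed
  have qd: "LCP_sol A (K_cone A) d x \<longleftrightarrow> x = 0" for x
  proof
    assume h: "LCP_sol A (K_cone A) d x"
    hence xK: "x \<in> K_cone A" and e: "x \<bullet> (A *v x) + x \<bullet> d = 0"
      unfolding LCP_sol_def by (auto simp: inner_add_right)
    have "0 \<le> x \<bullet> d" using ddual xK by (simp add: dual_cone_def)
    show "x = 0"
    proof (rule ccontr)
      assume "x \<noteq> 0"
      hence "x \<bullet> (A *v x) > 0" using assms(2) xK by blast
      thus False using e \<open>0 \<le> x \<bullet> d\<close> by linarith
    qed
  next
    assume "x = 0" thus "LCP_sol A (K_cone A) d x" using zK ddual
      by (simp add: LCP_sol_def)
  qed
  show ?thesis unfolding karamardian_def using assms(1) dint q0 qd by blast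
qed

end
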